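(* Let $\mathbb{S}$ be a locally finite, unbounded subset of $[0,\infty)$ with $0\in\mathbb{S}$, and let $(X_t)_{t\in\mathbb{N}}$ be $\mathbb{S}$-valued, adapted to a filtration $(\mathcal{F}_t)$, with $\mathbb{P}[X_1=0]=1$. Suppose that for each $x,y\in\mathbb{S}$ there exist $m(x,y)\in\mathbb{N}$, $\varphi(x,y)>0$ with $\mathbb{P}[X_{t+m(X_t,y)}=y\mid\mathcal{F}_t]\ge\varphi(X_t,y)$ a.s. for all $t$. Writing $\Delta_t:=X_{t+1}-X_t$, suppose there exists $B<\infty$ with $\mathbb{E}[\Delta_t^2\mid\mathcal{F}_t]\le B$ a.s. for all $t$, and there exist $x_0,c\in(0,\infty)$ such that on $\{X_t\ge x_0\}$, $\mathbb{E}[\Delta_t\mid\mathcal{F}_t]\ge-c/X_t$ a.s. for all $t$. Let $\Phi:[0,\infty)\to[0,\infty)$ be nondecreasing. Then there exists $\varepsilon>0$ such that for all $y$ sufficiently large, $$\mathbb{P}[M_1\ge y]\le2\,\mathbb{P}\Big[\sum_{t=1}^{\eta_1}\Phi(X_t)\ge\varepsilon y^2\Phi(y/2)\Big].$$ In particular, $\mathbb{P}[\eta_1\ge x]\ge\frac12\mathbb{P}[M_1\ge(x/\varepsilon)^{1/2}]$ for all $x$ sufficiently large.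
   Context: $\tau_0:=1$, $\tau_1:=\min\{t>1:X_t=0\}$ ($\min\emptyset=\infty$), $\eta_1:=\tau_1-\tau_0$, and $M_1:=\sup_{\tau_0\le t<\tau_1}X_t$. *)

theory Defs
  imports "HOL-Probability.Probability"
begin

text \<open>Excursion quantities for a process X indexed by nat (time starts at 1).
  tau0 = 1, tau1 = min {t > 1. X t = 0} (infinity if empty), eta1 = tau1 - tau0,
  M1 = sup of X t over tau0 <= t < tau1.\<close>

definition tau1 :: "(nat \<Rightarrow> 'a \<Rightarrow> real) \<Rightarrow> 'a \<Rightarrow> enat" where
  "tau1 X \<omega> = (if \<exists>t>1. X t \<omega> = 0 then enat (LEAST t. t > 1 \<and> X t \<omega> = 0) else \<infinity>)"

definition eta1 :: "(nat \<Rightarrow> 'a \<Rightarrow> real) \<Rightarrow> 'a \<Rightarrow> enat" where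
  "eta1 X \<omega> = tau1 X \<omega> - enat 1"

definition M1 :: "(nat \<Rightarrow> 'a \<Rightarrow> real) \<Rightarrow> 'a \<Rightarrow> ereal" where
  "M1 X \<omega> = (SUP t \<in> {t. 1 \<le> t \<and> enat t < tau1 X \<omega>}. ereal (X t \<omega>))"

definition additive_functional :: "(real \<Rightarrow> real) \<Rightarrow> (nat \<Rightarrow> 'a \<Rightarrow> real) \<Rightarrow> 'a \<Rightarrow> ennreal" where
  "additive_functional \<Phi> X \<omega> =
     (\<Sum>t. if 1 \<le> t \<and> enat t \<le> eta1 X \<omega> then ennreal (\<Phi> (X t \<omega>)) else 0)"

end

theory Submission
  imports Defs
begin

lemma path_bound:
  fixes x g :: "nat \<Rightarrow> real" and y c :: real and r n :: nat
  assumes y: "y > 0" and c: "c > 0" and x0: "x 0 \<ge> y"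
    and xr: "x r \<le> y/2" and rn: "r \<le> n"
    and gk: "\<And>k. k < r \<Longrightarrow> g k \<ge> - 2 * c / y"
    and nc: "8 * c * n \<le> y\<^sup>2"
  shows "(\<Sum>k<r. (x (Suc k) - x k) - g k) \<le> - y / 4"
proof -
  have "(\<Sum>k<r. (x (Suc k) - x k) - g k) = (x r - x 0) - (\<Sum>k<r. g k)"
    by (subst sum_subtractf, subst sum_lessThan_telescope, rule refl)
  moreover have "(\<Sum>k<r. g k) \<ge> (\<Sum>k<r. - 2 * c / y)"
    by (rule sum_mono) (use gk in auto)
  moreover have "(\<Sum>k<r. - 2 * c / y) = - (2 * c * r / y)" by simp
  moreover have "2 * c * r / y \<le> 2 * c * n / y"
    using rn c y by (intro divide_right_mono) auto
  moreover have "2 * c * n / y \<le> y / 4"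
  proof -
    have "2 * c * n / y = (8 * c * n) / (4 * y)" using y by (simp add: field_simps)
    also have "\<dots> \<le> y\<^sup>2 / (4 * y)" using nc y by (intro divide_right_mono) auto
    also have "\<dots> = y / 4" using y by (simp add: power2_eq_square field_simps)
    finally show ?thesis .
  qed
  ultimately show ?thesis using x0 xr by linarith
qed

lemma tau1_less:
  "enat k < tau1 X \<omega> \<longleftrightarrow> (\<forall>u. 1 < u \<and> u \<le> k \<longrightarrow> X u \<omega> \<noteq> 0)"
proof (cases "\<exists>t>1. X t \<omega> = 0")
  case True
  define L where "L = (LEAST t. t > 1 \<and> X t \<omega> = 0)"
  have tL: "tau1 X \<omega> = enat L" unfolding tau1_def L_def using True by simp
  have L1: "L > 1 \<and> X L \<omega> = 0" unfolding L_def using True by (metis (mono_tags, lifting) LeastI)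
  have L2: "1 < u \<Longrightarrow> X u \<omega> = 0 \<Longrightarrow> L \<le> u" for u unfolding L_def by (rule Least_le) simp
  show ?thesis
  proof
    assume "enat k < tau1 X \<omega>"
    then have "k < L" using tL by simp
    then show "\<forall>u. 1 < u \<and> u \<le> k \<longrightarrow> X u \<omega> \<noteq> 0" using L2 by force
  next
    assume H: "\<forall>u. 1 < u \<and> u \<le> k \<longrightarrow> X u \<omega> \<noteq> 0"
    have "k < L"
    proof (rule ccontr)
      assume "\<not> k < L"
      then show False using H L1 by auto
    qed
    then show "enat k < tau1 X \<omega>" using tL by simp
  qed
next
  case False
  then have "tau1 X \<omega> = \<infinity>" unfolding tau1_def by simp
  then show ?thesis using False by auto
qed

lemma tau1_ge2: "enat 1 < tau1 X \<omega>"
  using tau1_less[of 1 X \<omega>] by auto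

lemma eta1_ge: "enat k \<le> eta1 X \<omega> \<longleftrightarrow> enat k < tau1 X \<omega>"
proof (cases "tau1 X \<omega>")
  case (enat L)
  then have "L > 1" using tau1_ge2[of X \<omega>] by simp
  then show ?thesis unfolding eta1_def using enat by auto
next
  case infinity
  then show ?thesis unfolding eta1_def by simp
qed

locale L = prob_space M for M :: "'a measure" +
  fixes F :: "nat \<Rightarrow> 'a measure" and X :: "nat \<Rightarrow> 'a \<Rightarrow> real" and B :: real
    and x0 c :: real
  assumes filt_sub: "\<And>t. subalgebra M (F t)"
    and filt_mono: "\<And>s t. s \<le> t \<Longrightarrow> sets (F s) \<subseteq> sets (F t)"
    and adapted: "\<And>t. X t \<in> borel_measurable (F t)"
    and B_fin: "\<And>t. t \<ge> 1 \<Longrightarrow>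
        AE \<omega> in M. nn_cond_exp M (F t) (\<lambda>\<omega>'. ennreal ((X (Suc t) \<omega>' - X t \<omega>')\<^sup>2)) \<omega> \<le> ennreal B"
    and x0_pos: "x0 > 0" and c_pos: "c > 0"
    and drift: "\<And>t. t \<ge> 1 \<Longrightarrow>
        AE \<omega> in M. X t \<omega> \<ge> x0 \<longrightarrow>
          real_cond_exp M (F t) (\<lambda>\<omega>'. X (Suc t) \<omega>' - X t \<omega>') \<omega> \<ge> - c / X t \<omega>"
begin

lemma sfs: "sigma_finite_subalgebra M (F t)"
proof -
  interpret finite_measure_subalgebra M "F t"
    by unfold_locales (rule filt_sub)
  show ?thesis by unfold_locales
qed

lemma measM: "f \<in> borel_measurable (F t) \<Longrightarrow> f \<in> borel_measurable M"
  using measurable_from_subalg[OF filt_sub] by blast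

lemma setsM: "A \<in> sets (F t) \<Longrightarrow> A \<in> sets M"
  using filt_sub[of t] unfolding subalgebra_def by blast

lemma space_F: "space (F t) = space M"
  using filt_sub[of t] unfolding subalgebra_def by blast

lemma meas_mono: "s \<le> t \<Longrightarrow> f \<in> borel_measurable (F s) \<Longrightarrow> f \<in> borel_measurable (F t)"
proof -
  assume st: "s \<le> t" and f: "f \<in> borel_measurable (F s)"
  have "subalgebra (F t) (F s)" unfolding subalgebra_def using filt_mono[OF st] space_F by auto
  from measurable_from_subalg[OF this f] show ?thesis .
qed

lemma sets_mono': "s \<le> t \<Longrightarrow> A \<in> sets (F s) \<Longrightarrow> A \<in> sets (F t)"
  using filt_mono by blast

lemma XM [measurable]: "X t \<in> borel_measurable M"
  using measM[OF adapted] .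

lemma nn_bound:
  assumes t: "t \<ge> 1" and h: "h \<in> borel_measurable (F t)"
  shows "(\<integral>\<^sup>+\<omega>. ennreal (h \<omega>) * ennreal ((X (Suc t) \<omega> - X t \<omega>)\<^sup>2) \<partial>M)
     \<le> ennreal B * (\<integral>\<^sup>+\<omega>. ennreal (h \<omega>) \<partial>M)"
proof -
  interpret sigma_finite_subalgebra M "F t" by (rule sfs)
  have hF: "(\<lambda>\<omega>. ennreal (h \<omega>)) \<in> borel_measurable (F t)" using h by measurable
  have "(\<integral>\<^sup>+\<omega>. ennreal (h \<omega>) * ennreal ((X (Suc t) \<omega> - X t \<omega>)\<^sup>2) \<partial>M)
      = (\<integral>\<^sup>+\<omega>. ennreal (h \<omega>) * nn_cond_exp M (F t) (\<lambda>\<omega>'. ennreal ((X (Suc t) \<omega>' - X t \<omega>')\<^sup>2)) \<omega> \<partial>M)"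
    by (rule nn_cond_exp_intg[symmetric]) (use hF in auto)
  also have "\<dots> \<le> (\<integral>\<^sup>+\<omega>. ennreal (h \<omega>) * ennreal B \<partial>M)"
    by (rule nn_integral_mono_AE) (use B_fin[OF t] in \<open>eventually_elim, auto intro: mult_left_mono\<close>)
  also have "\<dots> = ennreal B * (\<integral>\<^sup>+\<omega>. ennreal (h \<omega>) \<partial>M)"
  proof -
    have "h \<in> borel_measurable M" using measM[OF h] .
    then have "(\<lambda>\<omega>. ennreal (h \<omega>)) \<in> borel_measurable M" by measurable
    then show ?thesis by (subst nn_integral_multc) (auto simp: mult.commute)
  qed
  finally show ?thesis .
qed

lemma int_prod:
  fixes f g :: "'a \<Rightarrow> real"
  assumes [measurable]: "f \<in> borel_measurable M" "g \<in> borel_measurable M"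
    and "integrable M (\<lambda>x. (f x)\<^sup>2)" "integrable M (\<lambda>x. (g x)\<^sup>2)"
  shows "integrable M (\<lambda>x. f x * g x)"
proof (rule Bochner_Integration.integrable_bound[of _ "\<lambda>x. (f x)\<^sup>2 + (g x)\<^sup>2"])
  show "integrable M (\<lambda>x. (f x)\<^sup>2 + (g x)\<^sup>2)" using assms by auto
  show "AE x in M. norm (f x * g x) \<le> norm ((f x)\<^sup>2 + (g x)\<^sup>2)"
  proof (rule AE_I2)
    fix x
    have "2 * \<bar>f x\<bar> * \<bar>g x\<bar> \<le> (f x)\<^sup>2 + (g x)\<^sup>2"
      using sum_squares_bound[of "\<bar>f x\<bar>" "\<bar>g x\<bar>"] by (simp add: power2_abs)
    moreover have "\<bar>f x\<bar> * \<bar>g x\<bar> \<ge> 0" by simp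
    ultimately have "\<bar>f x\<bar> * \<bar>g x\<bar> \<le> (f x)\<^sup>2 + (g x)\<^sup>2" by linarith
    then show "norm (f x * g x) \<le> norm ((f x)\<^sup>2 + (g x)\<^sup>2)"
      by (simp add: abs_mult)
  qed
qed simp

lemma sq_int_imp_int:
  fixes f :: "'a \<Rightarrow> real"
  assumes [measurable]: "f \<in> borel_measurable M" and "integrable M (\<lambda>x. (f x)\<^sup>2)"
  shows "integrable M f"
proof -
  have "integrable M (\<lambda>x. f x * 1)"
    by (rule int_prod) (use assms in auto)
  then show ?thesis by simp
qed

lemma D_weighted:
  assumes t: "t \<ge> 1" and h: "h \<in> borel_measurable (F t)" and h01: "\<And>\<omega>. 0 \<le> h \<omega> \<and> h \<omega> \<le> 1"
  shows "integrable M (\<lambda>\<omega>. h \<omega> * (X (Suc t) \<omega> - X t \<omega>)\<^sup>2)"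
    and "(\<integral>\<omega>. h \<omega> * (X (Suc t) \<omega> - X t \<omega>)\<^sup>2 \<partial>M) \<le> max B 0 * (\<integral>\<omega>. h \<omega> \<partial>M)"
proof -
  have hM [measurable]: "h \<in> borel_measurable M" using measM[OF h] .
  have "(\<integral>\<^sup>+\<omega>. ennreal (1::real) * ennreal ((X (Suc t) \<omega> - X t \<omega>)\<^sup>2) \<partial>M)
     \<le> ennreal B * (\<integral>\<^sup>+\<omega>. ennreal (1::real) \<partial>M)"
    by (rule nn_bound[OF t]) simp
  also have "\<dots> < \<infinity>" by (simp add: ennreal_mult_less_top emeasure_space_1)
  finally have "(\<integral>\<^sup>+\<omega>. ennreal ((X (Suc t) \<omega> - X t \<omega>)\<^sup>2) \<partial>M) < \<infinity>" by simp
  then have sq: "integrable M (\<lambda>\<omega>. (X (Suc t) \<omega> - X t \<omega>)\<^sup>2)"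
    by (intro integrableI_nonneg) auto
  show hi: "integrable M (\<lambda>\<omega>. h \<omega> * (X (Suc t) \<omega> - X t \<omega>)\<^sup>2)"
    by (rule Bochner_Integration.integrable_bound[OF sq]) (use h01 in \<open>auto simp: abs_mult intro!: mult_left_le_one_le\<close>)
  have hint: "integrable M h"
    by (rule Bochner_Integration.integrable_bound[of _ "\<lambda>_. 1::real"]) (use h01 in auto)
  have hnn: "0 \<le> (\<integral>\<omega>. h \<omega> \<partial>M)" by (rule Bochner_Integration.integral_nonneg) (use h01 in auto)
  have "ennreal (\<integral>\<omega>. h \<omega> * (X (Suc t) \<omega> - X t \<omega>)\<^sup>2 \<partial>M)
      = (\<integral>\<^sup>+\<omega>. ennreal (h \<omega> * (X (Suc t) \<omega> - X t \<omega>)\<^sup>2) \<partial>M)"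
    by (rule nn_integral_eq_integral[symmetric, OF hi]) (use h01 in auto)
  also have "\<dots> = (\<integral>\<^sup>+\<omega>. ennreal (h \<omega>) * ennreal ((X (Suc t) \<omega> - X t \<omega>)\<^sup>2) \<partial>M)"
    by (rule nn_integral_cong) (use h01 in \<open>simp add: ennreal_mult\<close>)
  also have "\<dots> \<le> ennreal B * (\<integral>\<^sup>+\<omega>. ennreal (h \<omega>) \<partial>M)"
    by (rule nn_bound[OF t h])
  also have "\<dots> \<le> ennreal (max B 0) * (\<integral>\<^sup>+\<omega>. ennreal (h \<omega>) \<partial>M)"
    by (intro mult_right_mono) (auto intro: ennreal_leI)
  also have "(\<integral>\<^sup>+\<omega>. ennreal (h \<omega>) \<partial>M) = ennreal (\<integral>\<omega>. h \<omega> \<partial>M)"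
    by (rule nn_integral_eq_integral[OF hint]) (use h01 in auto)
  also have "ennreal (max B 0) * ennreal (\<integral>\<omega>. h \<omega> \<partial>M) = ennreal (max B 0 * (\<integral>\<omega>. h \<omega> \<partial>M))"
    by (rule ennreal_mult[symmetric]) (use hnn in auto)
  finally have "ennreal (\<integral>\<omega>. h \<omega> * (X (Suc t) \<omega> - X t \<omega>)\<^sup>2 \<partial>M) \<le> ennreal (max B 0 * (\<integral>\<omega>. h \<omega> \<partial>M))" .
  moreover have "0 \<le> max B 0 * (\<integral>\<omega>. h \<omega> \<partial>M)" using hnn by simp
  ultimately show "(\<integral>\<omega>. h \<omega> * (X (Suc t) \<omega> - X t \<omega>)\<^sup>2 \<partial>M) \<le> max B 0 * (\<integral>\<omega>. h \<omega> \<partial>M)"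
    using ennreal_le_iff by blast
qed

lemma D_sq:
  assumes t: "t \<ge> 1"
  shows "integrable M (\<lambda>\<omega>. (X (Suc t) \<omega> - X t \<omega>)\<^sup>2)"
  using D_weighted(1)[OF t, of "\<lambda>_. 1"] by simp

lemma G_sq:
  assumes t: "t \<ge> 1"
  shows "integrable M (\<lambda>\<omega>. (real_cond_exp M (F t) (\<lambda>\<omega>. X (Suc t) \<omega> - X t \<omega>) \<omega>)\<^sup>2)"
proof -
  interpret sigma_finite_subalgebra M "F t" by (rule sfs)
  have Di: "integrable M (\<lambda>\<omega>. X (Suc t) \<omega> - X t \<omega>)"
    by (rule sq_int_imp_int) (use D_sq[OF t] in auto)
  show ?thesis
    using integrable_convex_cond_exp[OF Di, of UNIV _ _ power2] D_sq[OF t] convex_power2 by auto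
qed

lemma sqi_diff:
  fixes f g :: "'a \<Rightarrow> real"
  assumes [measurable]: "f \<in> borel_measurable M" "g \<in> borel_measurable M"
    and "integrable M (\<lambda>x. (f x)\<^sup>2)" "integrable M (\<lambda>x. (g x)\<^sup>2)"
  shows "integrable M (\<lambda>x. (f x - g x)\<^sup>2)" "integrable M (\<lambda>x. (f x + g x)\<^sup>2)"
proof -
  have fg: "integrable M (\<lambda>x. f x * g x)" by (rule int_prod) (use assms in auto)
  have "integrable M (\<lambda>x. (f x)\<^sup>2 - 2 * (f x * g x) + (g x)\<^sup>2)"
    using assms fg by auto
  moreover have "(f x - g x)\<^sup>2 = (f x)\<^sup>2 - 2 * (f x * g x) + (g x)\<^sup>2" for x
    by (simp add: power2_diff)
  ultimately show "integrable M (\<lambda>x. (f x - g x)\<^sup>2)" by simp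
  have "integrable M (\<lambda>x. (f x)\<^sup>2 + 2 * (f x * g x) + (g x)\<^sup>2)"
    using assms fg by auto
  moreover have "(f x + g x)\<^sup>2 = (f x)\<^sup>2 + 2 * (f x * g x) + (g x)\<^sup>2" for x
    by (simp add: power2_sum)
  ultimately show "integrable M (\<lambda>x. (f x + g x)\<^sup>2)" by simp
qed

lemma sqi_bdd:
  fixes f h :: "'a \<Rightarrow> real"
  assumes [measurable]: "f \<in> borel_measurable M" "h \<in> borel_measurable M"
    and "integrable M (\<lambda>x. (f x)\<^sup>2)" and h: "\<And>x. \<bar>h x\<bar> \<le> 1"
  shows "integrable M (\<lambda>x. (h x * f x)\<^sup>2)"
proof (rule Bochner_Integration.integrable_bound[OF assms(3)])
  show "AE x in M. norm ((h x * f x)\<^sup>2) \<le> norm ((f x)\<^sup>2)"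
  proof (rule AE_I2)
    fix x
    have "(h x)\<^sup>2 \<le> 1" using h[of x] by (simp add: abs_square_le_1) 
    then have "(h x)\<^sup>2 * (f x)\<^sup>2 \<le> 1 * (f x)\<^sup>2" by (intro mult_right_mono) auto
    then show "norm ((h x * f x)\<^sup>2) \<le> norm ((f x)\<^sup>2)" by (simp add: power_mult_distrib)
  qed
qed simp

lemma core:
  fixes s n :: nat and y :: real
  assumes s: "s \<ge> 1" and E: "E \<in> sets (F s)" and Ey: "\<And>\<omega>. \<omega> \<in> E \<Longrightarrow> y \<le> X s \<omega>"
    and y: "y > 0" and yx0: "x0 \<le> y/2" and nc: "8 * c * n \<le> y\<^sup>2"
  shows "measure M (E \<inter> {\<omega>\<in>space M. \<exists>j<n. X (s+j) \<omega> \<le> y/2})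
           \<le> 16 * n * max B 0 / y\<^sup>2 * measure M E"
proof -
  define D where "D k \<omega> = X (Suc (s+k)) \<omega> - X (s+k) \<omega>" for k \<omega>
  define G where "G k = real_cond_exp M (F (s+k)) (D k)" for k
  define Hs where "Hs k = {\<omega>\<in>space M. \<omega>\<in>E \<and> (\<forall>j\<le>k. y/2 < X (s+j) \<omega>)}" for k
  define H where "H k \<omega> = (indicator (Hs k) \<omega> :: real)" for k \<omega>
  define e where "e k \<omega> = H k \<omega> * (D k \<omega> - G k \<omega>)" for k \<omega>
  define S where "S k \<omega> = (\<Sum>j<k. e j \<omega>)" for k \<omega>
  define B' where "B' = max B 0"
  have EM: "E \<in> sets M" using setsM[OF E] .
  have Esp: "E \<subseteq> space M" using sets.sets_into_space[OF EM] .
  have HsF: "Hs k \<in> sets (F (s+k))" for k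
  proof -
    have "Hs k = E \<inter> (\<Inter>j\<in>{..k}. {\<omega>\<in>space (F (s+k)). y/2 < X (s+j) \<omega>})"
      unfolding Hs_def using Esp space_F by auto
    also have "\<dots> \<in> sets (F (s+k))"
    proof (rule sets.Int)
      show "E \<in> sets (F (s+k))" using sets_mono'[OF _ E] by simp
      show "(\<Inter>j\<in>{..k}. {\<omega>\<in>space (F (s+k)). y/2 < X (s+j) \<omega>}) \<in> sets (F (s+k))"
      proof (rule sets.finite_INT)
        fix j assume "j \<in> {..k}"
        then have [measurable]: "X (s+j) \<in> borel_measurable (F (s+k))"
          by (intro meas_mono[OF _ adapted]) auto
        show "{\<omega>\<in>space (F (s+k)). y/2 < X (s+j) \<omega>} \<in> sets (F (s+k))" by measurable
      qed auto
    qed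
    finally show ?thesis .
  qed
  have HF [measurable]: "H k \<in> borel_measurable (F (s+k))" for k
    unfolding H_def using HsF by simp
  have HM [measurable]: "H k \<in> borel_measurable M" for k using measM[OF HF] .
  have H01: "H k \<omega> = 0 \<or> H k \<omega> = 1" for k \<omega> unfolding H_def by (simp add: indicator_def)
  have Habs: "\<bar>H k \<omega>\<bar> \<le> 1" for k \<omega> using H01[of k \<omega>] by auto
  have Hsq: "H k \<omega> * H k \<omega> = H k \<omega>" for k \<omega> using H01[of k \<omega>] by auto
  have HsE: "Hs k \<subseteq> E" for k unfolding Hs_def by auto
  have HsM: "Hs k \<in> sets M" for k using setsM[OF HsF] .
  have DF: "D k \<in> borel_measurable (F (Suc (s+k)))" for k
  proof -
    have "X (s+k) \<in> borel_measurable (F (Suc (s+k)))" by (rule meas_mono[OF _ adapted]) auto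
    then show ?thesis unfolding D_def using adapted by measurable
  qed
  have DM [measurable]: "D k \<in> borel_measurable M" for k unfolding D_def by measurable
  have GF [measurable]: "G k \<in> borel_measurable (F (s+k))" for k unfolding G_def by simp
  have GM [measurable]: "G k \<in> borel_measurable M" for k unfolding G_def by simp
  have Dsq: "integrable M (\<lambda>\<omega>. (D k \<omega>)\<^sup>2)" for k
    unfolding D_def using D_sq[of "s+k"] s by simp
  have Gsq: "integrable M (\<lambda>\<omega>. (G k \<omega>)\<^sup>2)" for k
    unfolding G_def D_def using G_sq[of "s+k"] s by simp
  have eM [measurable]: "e k \<in> borel_measurable M" for k unfolding e_def by measurable
  have eF: "e k \<in> borel_measurable (F (Suc (s+k)))" for k
  proof -
    have "H k \<in> borel_measurable (F (Suc (s+k)))" by (rule meas_mono[OF _ HF]) auto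
    moreover have "G k \<in> borel_measurable (F (Suc (s+k)))" by (rule meas_mono[OF _ GF]) auto
    ultimately show ?thesis unfolding e_def using DF by measurable
  qed
  have esq: "integrable M (\<lambda>\<omega>. (e k \<omega>)\<^sup>2)" for k
    unfolding e_def by (rule sqi_bdd) (use Habs sqi_diff(1)[OF DM GM Dsq Gsq] in auto)
  have SF: "S k \<in> borel_measurable (F (s+k))" for k
    unfolding S_def
  proof (rule borel_measurable_sum)
    fix j assume "j \<in> {..<k}"
    then show "e j \<in> borel_measurable (F (s+k))" by (intro meas_mono[OF _ eF]) auto
  qed
  have SM [measurable]: "S k \<in> borel_measurable M" for k using measM[OF SF] .
  have Ssq: "integrable M (\<lambda>\<omega>. (S k \<omega>)\<^sup>2)" for k
  proof (induction k)
    case 0 then show ?case by (simp add: S_def)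
  next
    case (Suc k)
    have "integrable M (\<lambda>\<omega>. (S k \<omega> + e k \<omega>)\<^sup>2)"
      by (rule sqi_diff(2)) (use Suc esq in auto)
    then show ?case by (simp add: S_def add.commute)
  qed
  have cross: "(\<integral>\<omega>. S k \<omega> * e k \<omega> \<partial>M) = 0" for k
  proof -
    interpret sigma_finite_subalgebra M "F (s+k)" by (rule sfs)
    define f where "f \<omega> = S k \<omega> * H k \<omega>" for \<omega>
    have fF: "f \<in> borel_measurable (F (s+k))" unfolding f_def using SF HF by measurable
    have fM [measurable]: "f \<in> borel_measurable M" using measM[OF fF] .
    have fsq: "integrable M (\<lambda>\<omega>. (f \<omega>)\<^sup>2)"
      unfolding f_def using sqi_bdd[OF SM HM Ssq Habs] by (simp add: mult.commute)
    have fD: "integrable M (\<lambda>\<omega>. f \<omega> * D k \<omega>)" by (rule int_prod) (use fsq Dsq in auto)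
    have fG: "integrable M (\<lambda>\<omega>. f \<omega> * G k \<omega>)" by (rule int_prod) (use fsq Gsq in auto)
    have eq: "(\<integral>\<omega>. f \<omega> * G k \<omega> \<partial>M) = (\<integral>\<omega>. f \<omega> * D k \<omega> \<partial>M)"
      unfolding G_def by (rule real_cond_exp_intg(2)) (use fD fF in auto)
    have "(\<integral>\<omega>. S k \<omega> * e k \<omega> \<partial>M) = (\<integral>\<omega>. f \<omega> * D k \<omega> - f \<omega> * G k \<omega> \<partial>M)"
      unfolding e_def f_def by (rule Bochner_Integration.integral_cong) (auto simp: algebra_simps)
    also have "\<dots> = 0" using fD fG eq by simp
    finally show ?thesis .
  qed
  have esq_bd: "(\<integral>\<omega>. (e k \<omega>)\<^sup>2 \<partial>M) \<le> B' * measure M E" for k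
  proof -
    interpret sigma_finite_subalgebra M "F (s+k)" by (rule sfs)
    define f where "f \<omega> = H k \<omega> * G k \<omega>" for \<omega>
    have fF: "f \<in> borel_measurable (F (s+k))" unfolding f_def using GF HF by measurable
    have fM [measurable]: "f \<in> borel_measurable M" using measM[OF fF] .
    have fsq: "integrable M (\<lambda>\<omega>. (f \<omega>)\<^sup>2)"
      unfolding f_def by (rule sqi_bdd[OF GM HM Gsq Habs])
    have fD: "integrable M (\<lambda>\<omega>. f \<omega> * D k \<omega>)" by (rule int_prod) (use fsq Dsq in auto)
    have fG: "integrable M (\<lambda>\<omega>. f \<omega> * G k \<omega>)" by (rule int_prod) (use fsq Gsq in auto)
    have eq: "(\<integral>\<omega>. f \<omega> * G k \<omega> \<partial>M) = (\<integral>\<omega>. f \<omega> * D k \<omega> \<partial>M)"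
      unfolding G_def by (rule real_cond_exp_intg(2)) (use fD fF in auto)
    have HD: "integrable M (\<lambda>\<omega>. H k \<omega> * (D k \<omega>)\<^sup>2)"
      and HDb: "(\<integral>\<omega>. H k \<omega> * (D k \<omega>)\<^sup>2 \<partial>M) \<le> B' * (\<integral>\<omega>. H k \<omega> \<partial>M)"
      using D_weighted[of "s+k" "H k"] s HF H01 unfolding D_def B'_def
      by (auto simp: D_def) (metis zero_le_one order_refl)+
    have fGnn: "(\<integral>\<omega>. f \<omega> * G k \<omega> \<partial>M) \<ge> 0"
    proof (rule Bochner_Integration.integral_nonneg)
      fix x show "0 \<le> f x * G k x" unfolding f_def by (cases "H k x = 0") (use H01[of k x] in auto)
    qed
    have "(\<integral>\<omega>. (e k \<omega>)\<^sup>2 \<partial>M)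
        = (\<integral>\<omega>. H k \<omega> * (D k \<omega>)\<^sup>2 - 2 * (f \<omega> * D k \<omega>) + f \<omega> * G k \<omega> \<partial>M)"
    proof (rule Bochner_Integration.integral_cong)
      fix \<omega>
      have "(e k \<omega>)\<^sup>2 = (H k \<omega> * H k \<omega>) * (D k \<omega> - G k \<omega>)\<^sup>2"
        unfolding e_def by (simp add: power2_eq_square algebra_simps)
      also have "\<dots> = H k \<omega> * (D k \<omega>)\<^sup>2 - 2 * (f \<omega> * D k \<omega>) + f \<omega> * G k \<omega>"
        unfolding Hsq f_def by (simp add: power2_eq_square algebra_simps)
      finally show "(e k \<omega>)\<^sup>2 = H k \<omega> * (D k \<omega>)\<^sup>2 - 2 * (f \<omega> * D k \<omega>) + f \<omega> * G k \<omega>" .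
    qed simp
    also have "\<dots> = (\<integral>\<omega>. H k \<omega> * (D k \<omega>)\<^sup>2 \<partial>M) - 2 * (\<integral>\<omega>. f \<omega> * D k \<omega> \<partial>M) + (\<integral>\<omega>. f \<omega> * G k \<omega> \<partial>M)"
      using HD fD fG by simp
    also have "\<dots> = (\<integral>\<omega>. H k \<omega> * (D k \<omega>)\<^sup>2 \<partial>M) - (\<integral>\<omega>. f \<omega> * G k \<omega> \<partial>M)"
      using eq by simp
    also have "\<dots> \<le> B' * (\<integral>\<omega>. H k \<omega> \<partial>M)"
      using HDb fGnn by linarith
    also have "(\<integral>\<omega>. H k \<omega> \<partial>M) = measure M (Hs k)"
      unfolding H_def using sets.sets_into_space[OF HsM] by (simp add: Int_absorb2)
    also have "B' * measure M (Hs k) \<le> B' * measure M E"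
      by (intro mult_left_mono finite_measure_mono HsE EM) (auto simp: B'_def)
    finally show ?thesis .
  qed
  have Sbd: "(\<integral>\<omega>. (S k \<omega>)\<^sup>2 \<partial>M) \<le> k * (B' * measure M E)" for k
  proof (induction k)
    case 0 then show ?case by (simp add: S_def)
  next
    case (Suc k)
    have Se: "integrable M (\<lambda>\<omega>. S k \<omega> * e k \<omega>)" by (rule int_prod) (use Ssq esq in auto)
    have "(\<integral>\<omega>. (S (Suc k) \<omega>)\<^sup>2 \<partial>M) = (\<integral>\<omega>. (S k \<omega>)\<^sup>2 + 2 * (S k \<omega> * e k \<omega>) + (e k \<omega>)\<^sup>2 \<partial>M)"
      by (rule Bochner_Integration.integral_cong) (auto simp: S_def power2_sum)
    also have "\<dots> = (\<integral>\<omega>. (S k \<omega>)\<^sup>2 \<partial>M) + 2 * (\<integral>\<omega>. S k \<omega> * e k \<omega> \<partial>M) + (\<integral>\<omega>. (e k \<omega>)\<^sup>2 \<partial>M)"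
      using Ssq esq Se by simp
    also have "\<dots> \<le> k * (B' * measure M E) + 0 + B' * measure M E"
      using Suc.IH cross[of k] esq_bd[of k] by simp
    finally show ?case by (simp add: algebra_simps)
  qed
  define Bad where "Bad = {\<omega>\<in>space M. \<exists>j<n. X (s+j) \<omega> \<le> y/2}"
  have BadM: "Bad \<in> sets M" unfolding Bad_def by measurable
  have AEd: "AE \<omega> in M. \<forall>k. x0 \<le> X (s+k) \<omega> \<longrightarrow> - c / X (s+k) \<omega> \<le> G k \<omega>"
    unfolding AE_all_countable G_def D_def
  proof
    fix k show "AE \<omega> in M. x0 \<le> X (s+k) \<omega> \<longrightarrow> - c / X (s+k) \<omega> \<le> real_cond_exp M (F (s+k)) (\<lambda>\<omega>. X (Suc (s+k)) \<omega> - X (s+k) \<omega>) \<omega>"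
      using drift[of "s+k"] s by simp
  qed
  have incl: "AE \<omega> in M. \<omega> \<in> E \<inter> Bad \<longrightarrow> \<omega> \<in> {\<omega>\<in>space M. (y/4)\<^sup>2 \<le> (S n \<omega>)\<^sup>2}"
    using AEd
  proof eventually_elim
    case (elim \<omega>)
    show ?case
    proof
      assume om: "\<omega> \<in> E \<inter> Bad"
      then have sp: "\<omega> \<in> space M" and oE: "\<omega> \<in> E" and ex: "\<exists>j<n. X (s+j) \<omega> \<le> y/2"
        unfolding Bad_def by auto
      define r where "r = (LEAST j. X (s+j) \<omega> \<le> y/2)"
      obtain j0 where j0: "j0 < n" "X (s+j0) \<omega> \<le> y/2" using ex by auto
      have r1: "X (s+r) \<omega> \<le> y/2" unfolding r_def by (rule LeastI[of _ j0]) (use j0 in auto)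
      have r2: "r \<le> j0" unfolding r_def by (rule Least_le) (use j0 in auto)
      have rn: "r \<le> n" using r2 j0 by simp
      have below: "j < r \<Longrightarrow> y/2 < X (s+j) \<omega>" for j
        using not_less_Least[of j "\<lambda>j. X (s+j) \<omega> \<le> y/2"] unfolding r_def[symmetric] by simp
      have H1: "k < r \<Longrightarrow> H k \<omega> = 1" for k
        unfolding H_def Hs_def using sp oE below by auto
      have H0: "r \<le> k \<Longrightarrow> H k \<omega> = 0" for k
      proof -
        assume rk: "r \<le> k"
        have "\<omega> \<notin> Hs k" unfolding Hs_def using r1 rk by force
        then show ?thesis unfolding H_def by simp
      qed
      have "S n \<omega> = (\<Sum>k<r. e k \<omega>)"
        unfolding S_def
        by (rule sum.mono_neutral_right) (use rn H0 in \<open>auto simp: e_def\<close>)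
      also have "\<dots> = (\<Sum>k<r. (X (s + Suc k) \<omega> - X (s + k) \<omega>) - G k \<omega>)"
        by (rule sum.cong) (use H1 in \<open>auto simp: e_def D_def\<close>)
      also have "\<dots> \<le> - y / 4"
      proof (rule path_bound[where x = "\<lambda>j. X (s+j) \<omega>" and g = "\<lambda>k. G k \<omega>", OF y c_pos _ _ rn _ nc])
        show "y \<le> X (s+0) \<omega>" using Ey[OF oE] by simp
        show "X (s+r) \<omega> \<le> y/2" by (rule r1)
        fix k assume kr: "k < r"
        have xk: "y/2 < X (s+k) \<omega>" using below[OF kr] .
        then have "- c / X (s+k) \<omega> \<le> G k \<omega>" using elim yx0 by auto
        moreover have "c / X (s+k) \<omega> \<le> c / (y/2)"
          by (rule divide_left_mono) (use xk y c_pos in auto)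
        moreover have "c / (y/2) = 2 * c / y" by simp
        ultimately show "- 2 * c / y \<le> G k \<omega>" by simp
      qed
      finally have "S n \<omega> \<le> - y/4" .
      then have "y/4 \<le> \<bar>S n \<omega>\<bar>" by linarith
      then have "(y/4)\<^sup>2 \<le> \<bar>S n \<omega>\<bar>\<^sup>2" by (rule power_mono) (use y in auto)
      then show "\<omega> \<in> {\<omega>\<in>space M. (y/4)\<^sup>2 \<le> (S n \<omega>)\<^sup>2}" using sp by simp
    qed
  qed
  have "measure M (E \<inter> Bad) \<le> measure M {\<omega>\<in>space M. (y/4)\<^sup>2 \<le> (S n \<omega>)\<^sup>2}"
    by (rule finite_measure_mono_AE[OF incl]) measurable
  also have "\<dots> \<le> (\<integral>\<omega>. (S n \<omega>)\<^sup>2 \<partial>M) / (y/4)\<^sup>2"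
    by (rule integral_Markov_inequality_measure[OF Ssq, of "space M"]) (use y in auto)
  also have "\<dots> \<le> (n * (B' * measure M E)) / (y/4)\<^sup>2"
    by (rule divide_right_mono[OF Sbd]) simp
  also have "\<dots> = 16 * n * max B 0 / y\<^sup>2 * measure M E"
    using y by (simp add: B'_def field_simps power2_eq_square)
  finally show ?thesis unfolding Bad_def .
qed

lemma main:
  fixes y :: real and n :: nat and S :: "real set"
  assumes S_valued: "\<And>t \<omega>. \<omega> \<in> space M \<Longrightarrow> X t \<omega> \<in> S"
    and S_locfin: "\<And>b. finite (S \<inter> {..b})"
    and y: "y > 0" and yx0: "x0 \<le> y/2" and nc: "8 * c * n \<le> y\<^sup>2"
    and nb: "16 * n * max B 0 / y\<^sup>2 \<le> 1/2"
  shows "\<exists>G\<in>sets M. (\<forall>\<omega>\<in>G. \<exists>s\<ge>1. (\<forall>t. 1 < t \<and> t < s + n \<longrightarrow> X t \<omega> \<noteq> 0)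
                                  \<and> (\<forall>t. s \<le> t \<and> t < s + n \<longrightarrow> y/2 < X t \<omega>))
          \<and> measure M {\<omega>\<in>space M. ereal y \<le> M1 X \<omega>} \<le> 2 * measure M G"
proof -
  define E where "E s = {\<omega>\<in>space M. 1 \<le> s \<and> y \<le> X s \<omega> \<and> (\<forall>u. 1 \<le> u \<and> u < s \<longrightarrow> X u \<omega> < y)
                          \<and> (\<forall>u. 1 < u \<and> u \<le> s \<longrightarrow> X u \<omega> \<noteq> 0)}" for s
  define Bad where "Bad s = {\<omega>\<in>space M. \<exists>j<n. X (s+j) \<omega> \<le> y/2}" for s
  define Good where "Good s = E s - Bad s" for s
  have EF: "E s \<in> sets (F s)" for s
  proof (cases "1 \<le> s")
    case False
    then have "E s = {}" unfolding E_def by auto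
    then show ?thesis by simp
  next
    case True
    have "E s = {\<omega>\<in>space (F s). y \<le> X s \<omega>} \<inter>
       (\<Inter>u\<in>{..s}. {\<omega>\<in>space (F s). (1 \<le> u \<and> u < s \<longrightarrow> X u \<omega> < y) \<and> (1 < u \<longrightarrow> X u \<omega> \<noteq> 0)})"
      unfolding E_def using True space_F by auto
    also have "\<dots> \<in> sets (F s)"
    proof (rule sets.Int)
      have [measurable]: "X s \<in> borel_measurable (F s)" by (rule adapted)
      show "{\<omega>\<in>space (F s). y \<le> X s \<omega>} \<in> sets (F s)" by measurable
      show "(\<Inter>u\<in>{..s}. {\<omega>\<in>space (F s). (1 \<le> u \<and> u < s \<longrightarrow> X u \<omega> < y) \<and> (1 < u \<longrightarrow> X u \<omega> \<noteq> 0)}) \<in> sets (F s)"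
      proof (rule sets.finite_INT)
        fix u assume "u \<in> {..s}"
        then have [measurable]: "X u \<in> borel_measurable (F s)"
          by (intro meas_mono[OF _ adapted]) auto
        show "{\<omega>\<in>space (F s). (1 \<le> u \<and> u < s \<longrightarrow> X u \<omega> < y) \<and> (1 < u \<longrightarrow> X u \<omega> \<noteq> 0)} \<in> sets (F s)"
          by measurable
      qed auto
    qed
    finally show ?thesis .
  qed
  have EM: "E s \<in> sets M" for s using setsM[OF EF] .
  have BadM: "Bad s \<in> sets M" for s unfolding Bad_def by measurable
  have GoodM: "Good s \<in> sets M" for s unfolding Good_def using EM BadM by auto
  have disjE: "disjoint_family E"
    unfolding disjoint_family_on_def
  proof (intro ballI impI)
    fix s s' :: nat assume "s \<noteq> s'"
    have key: "\<omega> \<notin> E b" if "\<omega> \<in> E a" "a < b" for \<omega> a b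
    proof
      assume "\<omega> \<in> E b"
      then have "\<forall>u. 1 \<le> u \<and> u < b \<longrightarrow> X u \<omega> < y" unfolding E_def by blast
      moreover have "1 \<le> a" "y \<le> X a \<omega>" using that(1) unfolding E_def by blast+
      ultimately show False using that(2) by force
    qed
    consider "s < s'" | "s' < s" using \<open>s \<noteq> s'\<close> by linarith
    then show "E s \<inter> E s' = {}"
      by cases (use key in blast)+
  qed
  have disjG: "disjoint_family Good"
    using disjE unfolding Good_def disjoint_family_on_def by blast
  have halfs: "measure M (Good s) \<ge> 1/2 * measure M (E s)" for s
  proof (cases "1 \<le> s")
    case False
    then have "E s = {}" unfolding E_def by auto
    then show ?thesis unfolding Good_def by simp
  next
    case True
    have c: "measure M (E s \<inter> Bad s) \<le> 16 * n * max B 0 / y\<^sup>2 * measure M (E s)"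
      unfolding Bad_def by (rule core[OF True EF _ y yx0 nc]) (auto simp: E_def)
    also have "\<dots> \<le> 1/2 * measure M (E s)"
      by (rule mult_right_mono[OF nb]) simp
    finally have "measure M (E s \<inter> Bad s) \<le> 1/2 * measure M (E s)" .
    then show ?thesis unfolding Good_def using finite_measure_Diff'[OF EM BadM, of s s] by simp
  qed
  have sE: "(\<lambda>s. measure M (E s)) sums measure M (\<Union>s. E s)"
    by (rule finite_measure_UNION) (use EM disjE in auto)
  have sG: "(\<lambda>s. measure M (Good s)) sums measure M (\<Union>s. Good s)"
    by (rule finite_measure_UNION) (use GoodM disjG in auto)
  have "1/2 * measure M (\<Union>s. E s) \<le> measure M (\<Union>s. Good s)"
    by (rule sums_le[OF _ sums_mult[OF sE] sG]) (use halfs in simp)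
  moreover have "measure M {\<omega>\<in>space M. ereal y \<le> M1 X \<omega>} \<le> measure M (\<Union>s. E s)"
  proof (rule finite_measure_mono)
    show "(\<Union>s. E s) \<in> sets M" using EM by auto
    show "{\<omega>\<in>space M. ereal y \<le> M1 X \<omega>} \<subseteq> (\<Union>s. E s)"
    proof
      fix \<omega> assume "\<omega> \<in> {\<omega>\<in>space M. ereal y \<le> M1 X \<omega>}"
      then have sp: "\<omega> \<in> space M" and yM: "ereal y \<le> M1 X \<omega>" by auto
      define T where "T = {t. 1 \<le> t \<and> enat t < tau1 X \<omega>}"
      have ex: "\<exists>t\<in>T. y \<le> X t \<omega>"
      proof (rule ccontr)
        assume "\<not> ?thesis"
        then have lt: "\<And>t. t \<in> T \<Longrightarrow> X t \<omega> < y" by force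
        have sub: "(\<lambda>t. ereal (X t \<omega>)) ` T \<subseteq> ereal ` (S \<inter> {..y})"
        proof
          fix z assume "z \<in> (\<lambda>t. ereal (X t \<omega>)) ` T"
          then obtain t where tT: "t \<in> T" and z: "z = ereal (X t \<omega>)" by blast
          have "X t \<omega> \<in> S \<inter> {..y}" using lt[OF tT] S_valued[OF sp, of t] by simp
          then show "z \<in> ereal ` (S \<inter> {..y})" using z by blast
        qed
        have fin: "finite ((\<lambda>t. ereal (X t \<omega>)) ` T)"
          by (rule finite_subset[OF sub]) (use S_locfin in auto)
        have ne: "(\<lambda>t. ereal (X t \<omega>)) ` T \<noteq> {}" using tau1_ge2[of X \<omega>] unfolding T_def by auto
        have "M1 X \<omega> = Max ((\<lambda>t. ereal (X t \<omega>)) ` T)"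
          unfolding M1_def T_def[symmetric] by (rule cSup_eq_Max[OF fin ne])
        moreover have "Max ((\<lambda>t. ereal (X t \<omega>)) ` T) \<in> (\<lambda>t. ereal (X t \<omega>)) ` T"
          by (rule Max_in[OF fin ne])
        ultimately obtain t where tT: "t \<in> T" and Mt: "M1 X \<omega> = ereal (X t \<omega>)" by auto
        have "X t \<omega> < y" using lt[OF tT] .
        moreover have "y \<le> X t \<omega>" using yM Mt by simp
        ultimately show False by simp
      qed
      define s where "s = (LEAST t. t \<in> T \<and> y \<le> X t \<omega>)"
      have s1: "s \<in> T \<and> y \<le> X s \<omega>" unfolding s_def using ex by (metis (mono_tags, lifting) LeastI)
      have s2: "u \<in> T \<Longrightarrow> y \<le> X u \<omega> \<Longrightarrow> s \<le> u" for u unfolding s_def by (rule Least_le) simp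
      have "\<omega> \<in> E s"
        unfolding E_def
      proof (intro CollectI conjI allI impI)
        show "\<omega> \<in> space M" by (rule sp)
        show "1 \<le> s" using s1 unfolding T_def by simp
        show "y \<le> X s \<omega>" using s1 by simp
      next
        fix u assume u: "1 \<le> u \<and> u < s"
        then have "u \<in> T" using s1 unfolding T_def by (auto intro: less_trans[of "enat u" "enat s"])
        then show "X u \<omega> < y" using s2[of u] u by force
      next
        fix u assume u: "1 < u \<and> u \<le> s"
        have "enat s < tau1 X \<omega>" using s1 unfolding T_def by simp
        then show "X u \<omega> \<noteq> 0" using u unfolding tau1_less by blast
      qed
      then show "\<omega> \<in> (\<Union>s. E s)" by blast
    qed
  qed
  moreover have "\<forall>\<omega>\<in>(\<Union>s. Good s). \<exists>s\<ge>1. (\<forall>t. 1 < t \<and> t < s + n \<longrightarrow> X t \<omega> \<noteq> 0)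
                                  \<and> (\<forall>t. s \<le> t \<and> t < s + n \<longrightarrow> y/2 < X t \<omega>)"
  proof
    fix \<omega> assume "\<omega> \<in> (\<Union>s. Good s)"
    then obtain s where oE: "\<omega> \<in> E s" and nB: "\<omega> \<notin> Bad s" unfolding Good_def by auto
    have sp: "\<omega> \<in> space M" using oE unfolding E_def by auto
    have above: "j < n \<Longrightarrow> y/2 < X (s+j) \<omega>" for j using nB sp unfolding Bad_def by force
    show "\<exists>s\<ge>1. (\<forall>t. 1 < t \<and> t < s + n \<longrightarrow> X t \<omega> \<noteq> 0) \<and> (\<forall>t. s \<le> t \<and> t < s + n \<longrightarrow> y/2 < X t \<omega>)"
    proof (intro exI[of _ s] conjI allI impI)
      show "1 \<le> s" using oE unfolding E_def by auto
    next
      fix t assume t: "s \<le> t \<and> t < s + n"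
      then have "t - s < n" "s + (t - s) = t" by auto
      then show "y/2 < X t \<omega>" using above[of "t - s"] by simp
    next
      fix t assume t: "1 < t \<and> t < s + n"
      show "X t \<omega> \<noteq> 0"
      proof (cases "t \<le> s")
        case True then show ?thesis using oE t unfolding E_def by auto
      next
        case False
        then have "t - s < n" "s + (t - s) = t" using t by auto
        then have "y/2 < X t \<omega>" using above[of "t - s"] by simp
        then show ?thesis using y by auto
      qed
    qed
  qed
  moreover have "(\<Union>s. Good s) \<in> sets M" using GoodM by auto
  ultimately show ?thesis by (intro bexI[of _ "\<Union>s. Good s"]) auto
qed

end


lemma params:
  fixes K B' c y :: real and n :: nat
  assumes K: "K = B' + c" and B': "B' \<ge> 0" and c: "c > 0" and y: "y \<ge> 64 * K + 1"
    and n_def: "n = nat \<lceil>y\<^sup>2 / (64 * K)\<rceil>"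
  shows "8 * c * n \<le> y\<^sup>2" "16 * n * B' / y\<^sup>2 \<le> 1/2" "y\<^sup>2 / (64 * K) \<le> n"
proof -
  have Kp: "K > 0" using K B' c by simp
  have y1: "y \<ge> 1" using y Kp by simp
  have yy: "y\<^sup>2 \<ge> y" using y1 by (simp add: power2_eq_square)
  have yK: "y\<^sup>2 \<ge> 64 * K" using yy y by simp
  have z0: "0 \<le> y\<^sup>2 / (64 * K)" using Kp by simp
  have n1: "n \<le> y\<^sup>2 / (64 * K) + 1" unfolding n_def
    using z0 of_int_ceiling_le_add_one[of "y\<^sup>2 / (64 * K)"] by (simp add: of_nat_nat)
  show n2: "y\<^sup>2 / (64 * K) \<le> n" unfolding n_def by (simp add: real_nat_ceiling_ge)
  have "8 * c * n \<le> 8 * c * (y\<^sup>2 / (64 * K) + 1)" using n1 c by simp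
  also have "\<dots> = (c / K) * (y\<^sup>2 / 8) + 8 * c" using Kp by (simp add: field_simps)
  also have "\<dots> \<le> 1 * (y\<^sup>2 / 8) + 8 * K"
  proof -
    have "c / K \<le> 1" using K B' c Kp by simp
    then have "(c / K) * (y\<^sup>2 / 8) \<le> 1 * (y\<^sup>2 / 8)" by (intro mult_right_mono) auto
    moreover have "8 * c \<le> 8 * K" using K B' by simp
    ultimately show ?thesis by linarith
  qed
  also have "\<dots> \<le> y\<^sup>2" using yK zero_le_power2[of y] by linarith
  finally show "8 * c * n \<le> y\<^sup>2" .
  have "16 * n * B' \<le> 16 * (y\<^sup>2 / (64 * K) + 1) * B'" using n1 B' by (intro mult_right_mono) auto
  also have "\<dots> = (B' / K) * (y\<^sup>2 / 4) + 16 * B'" using Kp by (simp add: field_simps)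
  also have "\<dots> \<le> 1 * (y\<^sup>2 / 4) + 16 * K"
  proof -
    have "B' / K \<le> 1" using K B' c Kp by simp
    then have "(B' / K) * (y\<^sup>2 / 4) \<le> 1 * (y\<^sup>2 / 4)" by (intro mult_right_mono) auto
    moreover have "16 * B' \<le> 16 * K" using K c by simp
    ultimately show ?thesis by linarith
  qed
  also have "\<dots> \<le> y\<^sup>2 / 2" using yK zero_le_power2[of y] by linarith
  finally have "16 * n * B' \<le> y\<^sup>2 / 2" .
  moreover have "y\<^sup>2 > 0" using y1 by simp
  ultimately show "16 * n * B' / y\<^sup>2 \<le> 1/2" by (simp add: divide_le_eq)
qed

lemma ereal_enat_ge_iff:
  fixes x :: real
  shows "ereal x \<le> ereal_of_enat e \<longleftrightarrow> enat (nat \<lceil>x\<rceil>) \<le> e"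
proof (cases e)
  case (enat m)
  have "ereal x \<le> ereal_of_enat e \<longleftrightarrow> x \<le> real m" using enat by simp
  also have "\<dots> \<longleftrightarrow> \<lceil>x\<rceil> \<le> int m" by (simp add: ceiling_le_iff)
  also have "\<dots> \<longleftrightarrow> nat \<lceil>x\<rceil> \<le> m" by linarith
  finally show ?thesis using enat by simp
next
  case infinity then show ?thesis by simp
qed

theorem lemma4p11:
  fixes M :: "'a measure" and F :: "nat \<Rightarrow> 'a measure" and X :: "nat \<Rightarrow> 'a \<Rightarrow> real"
    and S :: "real set" and m :: "real \<Rightarrow> real \<Rightarrow> nat" and \<phi> :: "real \<Rightarrow> real \<Rightarrow> real"
    and B x0 c :: real and \<Phi> :: "real \<Rightarrow> real"
  assumes prob: "prob_space M"
    and S_nonneg: "S \<subseteq> {0..}"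
    and S_locfin: "\<And>b. finite (S \<inter> {..b})"
    and S_unbdd: "\<not> bdd_above S"
    and S_zero: "0 \<in> S"
    and filt_sub: "\<And>t. subalgebra M (F t)"
    and filt_mono: "\<And>s t. s \<le> t \<Longrightarrow> sets (F s) \<subseteq> sets (F t)"
    and adapted: "\<And>t. X t \<in> borel_measurable (F t)"
    and S_valued: "\<And>t \<omega>. \<omega> \<in> space M \<Longrightarrow> X t \<omega> \<in> S"
    and start: "AE \<omega> in M. X 1 \<omega> = 0"
    and \<phi>_pos: "\<And>x y. x \<in> S \<Longrightarrow> y \<in> S \<Longrightarrow> \<phi> x y > 0"
    and irred: "\<And>t y. t \<ge> 1 \<Longrightarrow> y \<in> S \<Longrightarrow>
        AE \<omega> in M. real_cond_exp M (F t)
            (indicator {\<omega>' \<in> space M. X (t + m (X t \<omega>') y) \<omega>' = y}) \<omega> \<ge> \<phi> (X t \<omega>) y"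
    and B_fin: "\<And>t. t \<ge> 1 \<Longrightarrow>
        AE \<omega> in M. nn_cond_exp M (F t) (\<lambda>\<omega>'. ennreal ((X (Suc t) \<omega>' - X t \<omega>')\<^sup>2)) \<omega> \<le> ennreal B"
    and x0_pos: "x0 > 0" and c_pos: "c > 0"
    and drift: "\<And>t. t \<ge> 1 \<Longrightarrow>
        AE \<omega> in M. X t \<omega> \<ge> x0 \<longrightarrow>
          real_cond_exp M (F t) (\<lambda>\<omega>'. X (Suc t) \<omega>' - X t \<omega>') \<omega> \<ge> - c / X t \<omega>"
    and \<Phi>_mono: "mono_on {0..} \<Phi>"
    and \<Phi>_nonneg: "\<And>x. x \<ge> 0 \<Longrightarrow> \<Phi> x \<ge> 0"
  shows "(\<exists>\<epsilon>>0. \<exists>y0. \<forall>y\<ge>y0.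
            measure M {\<omega> \<in> space M. M1 X \<omega> \<ge> ereal y}
              \<le> 2 * measure M {\<omega> \<in> space M.
                     additive_functional \<Phi> X \<omega> \<ge> ennreal (\<epsilon> * y\<^sup>2 * \<Phi> (y / 2))})
       \<and> (\<exists>\<epsilon>>0. \<exists>x1. \<forall>x\<ge>x1.
            measure M {\<omega> \<in> space M. ereal_of_enat (eta1 X \<omega>) \<ge> ereal x}
              \<ge> 1/2 * measure M {\<omega> \<in> space M. M1 X \<omega> \<ge> ereal ((x / \<epsilon>) powr (1/2))})"
proof -
  interpret L M F X B x0 c
    by (rule L.intro[OF prob], unfold_locales) (use filt_sub filt_mono adapted B_fin x0_pos c_pos drift in auto)
  define B' where "B' = max B 0"
  define K where "K = B' + c"
  define \<epsilon> where "\<epsilon> = 1 / (64 * K)"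
  define y0 where "y0 = max (2 * x0) (64 * K + 1)"
  have Kp: "K > 0" unfolding K_def B'_def using c_pos by simp
  have epos: "\<epsilon> > 0" unfolding \<epsilon>_def using Kp by simp
  have y0p: "y0 > 0" unfolding y0_def using x0_pos by simp
  have Xnn: "\<omega> \<in> space M \<Longrightarrow> X t \<omega> \<ge> 0" for t \<omega> using S_valued S_nonneg by force
  have key: "\<exists>G\<in>sets M. (\<forall>\<omega>\<in>G. \<exists>s\<ge>1. (\<forall>t. 1 < t \<and> t < s + nat \<lceil>\<epsilon> * y\<^sup>2\<rceil> \<longrightarrow> X t \<omega> \<noteq> 0)
                                  \<and> (\<forall>t. s \<le> t \<and> t < s + nat \<lceil>\<epsilon> * y\<^sup>2\<rceil> \<longrightarrow> y/2 < X t \<omega>))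
          \<and> measure M {\<omega>\<in>space M. ereal y \<le> M1 X \<omega>} \<le> 2 * measure M G"
    if y: "y \<ge> y0" for y
  proof -
    have yK: "y \<ge> 64 * K + 1" using y unfolding y0_def by simp
    have ey: "\<epsilon> * y\<^sup>2 = y\<^sup>2 / (64 * K)" unfolding \<epsilon>_def by simp
    note P = params[OF K_def _ c_pos yK refl, unfolded ey[symmetric]]
    have a1: "y > 0" using y y0p by simp
    have a2: "x0 \<le> y/2" using y unfolding y0_def by simp
    have a3: "8 * c * real (nat \<lceil>\<epsilon> * y\<^sup>2\<rceil>) \<le> y\<^sup>2" using P(1) by (simp add: B'_def)
    have a4: "real (16 * nat \<lceil>\<epsilon> * y\<^sup>2\<rceil>) * max B 0 / y\<^sup>2 \<le> 1/2" using P(2) by (simp add: B'_def)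
    show ?thesis by (rule main[OF S_valued S_locfin a1 a2 a3 a4])
  qed
  define A where "A = additive_functional \<Phi> X"
  define \<Phi>' where "\<Phi>' x = \<Phi> (max 0 x)" for x
  have \<Phi>'mono: "mono \<Phi>'"
    unfolding mono_def \<Phi>'_def
  proof (intro allI impI)
    fix a b :: real assume "a \<le> b"
    then show "\<Phi> (max 0 a) \<le> \<Phi> (max 0 b)"
      using \<Phi>_mono unfolding mono_on_def by auto
  qed
  have \<Phi>'M [measurable]: "\<Phi>' \<in> borel_measurable borel" by (rule borel_measurable_mono[OF \<Phi>'mono])
  define g where "g t \<omega> = (if 1 \<le> t \<and> (\<forall>u\<in>{1<..t}. X u \<omega> \<noteq> 0) then ennreal (\<Phi>' (X t \<omega>)) else 0)" for t \<omega>
  have gM [measurable]: "g t \<in> borel_measurable M" for t unfolding g_def by measurable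
  have Aeq: "A \<omega> = (\<Sum>t. g t \<omega>)" if "\<omega> \<in> space M" for \<omega>
    unfolding A_def additive_functional_def
  proof (rule suminf_cong)
    fix t
    have "(enat t \<le> eta1 X \<omega>) = (\<forall>u\<in>{1<..t}. X u \<omega> \<noteq> 0)"
      unfolding eta1_ge tau1_less by auto
    moreover have "\<Phi> (X t \<omega>) = \<Phi>' (X t \<omega>)" unfolding \<Phi>'_def using Xnn[OF that] by simp
    ultimately show "(if 1 \<le> t \<and> enat t \<le> eta1 X \<omega> then ennreal (\<Phi> (X t \<omega>)) else 0) = g t \<omega>"
      unfolding g_def by simp
  qed
  have T1M: "{\<omega>\<in>space M. z \<le> A \<omega>} \<in> sets M" for z
  proof -
    have "{\<omega>\<in>space M. z \<le> A \<omega>} = {\<omega>\<in>space M. z \<le> (\<Sum>t. g t \<omega>)}" using Aeq by auto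
    also have "\<dots> \<in> sets M" by measurable
    finally show ?thesis .
  qed
  have part1: "\<exists>\<epsilon>>0. \<exists>y0. \<forall>y\<ge>y0.
            measure M {\<omega> \<in> space M. M1 X \<omega> \<ge> ereal y}
              \<le> 2 * measure M {\<omega> \<in> space M.
                     additive_functional \<Phi> X \<omega> \<ge> ennreal (\<epsilon> * y\<^sup>2 * \<Phi> (y / 2))}"
  proof (rule exI[of _ \<epsilon>], intro conjI epos exI[of _ y0] allI impI)
    fix y assume y: "y0 \<le> y"
    define n where "n = nat \<lceil>\<epsilon> * y\<^sup>2\<rceil>"
    from key[OF y] obtain G where GM: "G \<in> sets M"
      and GP: "\<forall>\<omega>\<in>G. \<exists>s\<ge>1. (\<forall>t. 1 < t \<and> t < s + n \<longrightarrow> X t \<omega> \<noteq> 0)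
                                  \<and> (\<forall>t. s \<le> t \<and> t < s + n \<longrightarrow> y/2 < X t \<omega>)"
      and Gm: "measure M {\<omega>\<in>space M. ereal y \<le> M1 X \<omega>} \<le> 2 * measure M G"
      unfolding n_def by blast
    have yp: "y > 0" using y y0p by simp
    have GT: "G \<subseteq> {\<omega>\<in>space M. ennreal (\<epsilon> * y\<^sup>2 * \<Phi> (y / 2)) \<le> A \<omega>}"
    proof
      fix \<omega> assume oG: "\<omega> \<in> G"
      then have sp: "\<omega> \<in> space M" using sets.sets_into_space[OF GM] by auto
      obtain s where s1: "s \<ge> 1" and nz: "\<forall>t. 1 < t \<and> t < s + n \<longrightarrow> X t \<omega> \<noteq> 0"
        and ab: "\<forall>t. s \<le> t \<and> t < s + n \<longrightarrow> y/2 < X t \<omega>" using GP oG by blast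
      have gt: "ennreal (\<Phi> (y/2)) \<le> g t \<omega>" if t: "t \<in> {s..<s+n}" for t
      proof -
        have "1 \<le> t \<and> (\<forall>u\<in>{1<..t}. X u \<omega> \<noteq> 0)" using t s1 nz by auto
        then have "g t \<omega> = ennreal (\<Phi>' (X t \<omega>))" unfolding g_def by simp
        also have "\<Phi>' (X t \<omega>) = \<Phi> (X t \<omega>)" unfolding \<Phi>'_def using Xnn[OF sp] by simp
        finally have geq: "g t \<omega> = ennreal (\<Phi> (X t \<omega>))" .
        have "y/2 < X t \<omega>" using ab t by auto
        then have "\<Phi> (y/2) \<le> \<Phi> (X t \<omega>)"
          using \<Phi>_mono yp unfolding mono_on_def by auto
        then show ?thesis unfolding geq by (rule ennreal_leI)
      qed
      have "ennreal (\<epsilon> * y\<^sup>2 * \<Phi> (y / 2)) \<le> ennreal (real n * \<Phi> (y/2))"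
      proof (rule ennreal_leI, rule mult_right_mono)
        show "\<epsilon> * y\<^sup>2 \<le> real n" unfolding n_def by (rule real_nat_ceiling_ge)
        show "0 \<le> \<Phi> (y/2)" using \<Phi>_nonneg yp by simp
      qed
      also have "\<dots> = (\<Sum>t\<in>{s..<s+n}. ennreal (\<Phi> (y/2)))"
        using \<Phi>_nonneg[of "y/2"] yp by (simp add: ennreal_mult' ennreal_of_nat_eq_real_of_nat)
      also have "\<dots> \<le> (\<Sum>t\<in>{s..<s+n}. g t \<omega>)" by (rule sum_mono) (rule gt)
      also have "\<dots> \<le> (\<Sum>t. g t \<omega>)" by (rule sum_le_suminf) (auto intro: summableI)
      also have "\<dots> = A \<omega>" using Aeq[OF sp] by simp
      finally show "\<omega> \<in> {\<omega>\<in>space M. ennreal (\<epsilon> * y\<^sup>2 * \<Phi> (y / 2)) \<le> A \<omega>}" using sp by simp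
    qed
    have "measure M G \<le> measure M {\<omega>\<in>space M. ennreal (\<epsilon> * y\<^sup>2 * \<Phi> (y / 2)) \<le> A \<omega>}"
      by (rule finite_measure_mono[OF GT T1M])
    then show "measure M {\<omega> \<in> space M. M1 X \<omega> \<ge> ereal y}
              \<le> 2 * measure M {\<omega> \<in> space M.
                     additive_functional \<Phi> X \<omega> \<ge> ennreal (\<epsilon> * y\<^sup>2 * \<Phi> (y / 2))}"
      using Gm unfolding A_def by simp
  qed
  have part2: "\<exists>\<epsilon>>0. \<exists>x1. \<forall>x\<ge>x1.
            measure M {\<omega> \<in> space M. ereal_of_enat (eta1 X \<omega>) \<ge> ereal x}
              \<ge> 1/2 * measure M {\<omega> \<in> space M. M1 X \<omega> \<ge> ereal ((x / \<epsilon>) powr (1/2))}"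
  proof (rule exI[of _ \<epsilon>], intro conjI epos exI[of _ "\<epsilon> * y0\<^sup>2"] allI impI)
    fix x assume x: "\<epsilon> * y0\<^sup>2 \<le> x"
    have xp: "x > 0" using x epos y0p by (smt (verit) mult_pos_pos zero_less_power)
    define y where "y = (x / \<epsilon>) powr (1/2)"
    have ysq: "y = sqrt (x / \<epsilon>)" unfolding y_def using xp epos by (simp add: powr_half_sqrt)
    have y2: "y\<^sup>2 = x / \<epsilon>" unfolding ysq using xp epos by simp
    have "y0\<^sup>2 \<le> x / \<epsilon>" using x epos by (simp add: field_simps)
    then have "sqrt (y0\<^sup>2) \<le> sqrt (x / \<epsilon>)" by (rule real_sqrt_le_mono)
    then have yy0: "y0 \<le> y" unfolding ysq using y0p by simp
    have exy: "\<epsilon> * y\<^sup>2 = x" unfolding y2 using epos by simp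
    define n where "n = nat \<lceil>x\<rceil>"
    from key[OF yy0] obtain G where GM: "G \<in> sets M"
      and GP: "\<forall>\<omega>\<in>G. \<exists>s\<ge>1. (\<forall>t. 1 < t \<and> t < s + n \<longrightarrow> X t \<omega> \<noteq> 0)
                                  \<and> (\<forall>t. s \<le> t \<and> t < s + n \<longrightarrow> y/2 < X t \<omega>)"
      and Gm: "measure M {\<omega>\<in>space M. ereal y \<le> M1 X \<omega>} \<le> 2 * measure M G"
      unfolding n_def exy by blast
    define T2 where "T2 = {\<omega>\<in>space M. ereal x \<le> ereal_of_enat (eta1 X \<omega>)}"
    have T2eq: "T2 = {\<omega>\<in>space M. \<forall>u\<in>{1<..n}. X u \<omega> \<noteq> 0}"
      unfolding T2_def n_def ereal_enat_ge_iff eta1_ge tau1_less by auto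
    have T2M: "T2 \<in> sets M" unfolding T2eq by measurable
    have GT: "G \<subseteq> T2"
    proof
      fix \<omega> assume oG: "\<omega> \<in> G"
      then have sp: "\<omega> \<in> space M" using sets.sets_into_space[OF GM] by auto
      obtain s where s1: "s \<ge> 1" and nz: "\<forall>t. 1 < t \<and> t < s + n \<longrightarrow> X t \<omega> \<noteq> 0"
        using GP oG by blast
      show "\<omega> \<in> T2" unfolding T2eq using sp nz s1 by auto
    qed
    have "measure M G \<le> measure M T2" by (rule finite_measure_mono[OF GT T2M])
    then show "1/2 * measure M {\<omega> \<in> space M. M1 X \<omega> \<ge> ereal ((x / \<epsilon>) powr (1/2))}
        \<le> measure M {\<omega> \<in> space M. ereal_of_enat (eta1 X \<omega>) \<ge> ereal x}"
      using Gm unfolding T2_def y_def by simp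
  qed
  show ?thesis using part1 part2 by blast
qed

end
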